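(* Let $g(T)=\sum_{i\in\mathbb{Z}}a_iT^i\in\mathcal{E}_K$. If $\mathrm{Ray}(\partial_T-g(T),1)>\omega$, then $|a_i|<1$ for all $i\le-1$.
   Context: $K$ is a field of characteristic $0$, complete for a non-archimedean absolute value, residue field of characteristic $p>0$; $\omega=|p|^{1/(p-1)}$. $\mathcal{E}_K$ is the ring of Laurent series $\sum a_iT^i$ over $K$ with $\sup|a_i|<\infty$ and $|a_i|\to0$ as $i\to-\infty$, Gauss norm $|\cdot|_1=\sup|a_i|$. $\partial_T=T\frac d{dT}$. For $g\in\mathcal{E}_K$: $g_{[0]}=1$, $g_{[1]}=g/T$, $g_{[k+1]}=\frac d{dT}(g_{[k]})+g_{[k]}g_{[1]}$, and $\mathrm{Ray}(\partial_T-g,1)=\min\big(1,\liminf_k(|g_{[k]}|_1/|k!|)^{-1/k}\big)$. *)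

theory Defs
  imports Complex_Main "HOL-Computational_Algebra.Primes" "HOL-Library.Extended_Real" "HOL-Library.Liminf_Limsup"
begin

definition nonarch_av :: "('k::field \<Rightarrow> real) \<Rightarrow> bool" where
  "nonarch_av av \<longleftrightarrow> (\<forall>x. 0 \<le> av x) \<and> (\<forall>x. av x = 0 \<longleftrightarrow> x = 0)
     \<and> (\<forall>x y. av (x * y) = av x * av y) \<and> (\<forall>x y. av (x + y) \<le> max (av x) (av y))"

definition av_tendsto :: "('k::field \<Rightarrow> real) \<Rightarrow> (nat \<Rightarrow> 'k) \<Rightarrow> 'k \<Rightarrow> bool" where
  "av_tendsto av X L \<longleftrightarrow> (\<forall>e>0. \<exists>N. \<forall>n\<ge>N. av (X n - L) < e)"

definition av_complete :: "('k::field \<Rightarrow> real) \<Rightarrow> bool" where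
  "av_complete av \<longleftrightarrow> (\<forall>X. (\<forall>e>0. \<exists>N. \<forall>m\<ge>N. \<forall>n\<ge>N. av (X m - X n) < e)
       \<longrightarrow> (\<exists>L. av_tendsto av X L))"

definition av_sum :: "('k::field \<Rightarrow> real) \<Rightarrow> (int \<Rightarrow> 'k) \<Rightarrow> 'k" where
  "av_sum av c = (THE L. av_tendsto av (\<lambda>N::nat. \<Sum>i\<in>{- int N..int N}. c i) L)"

text \<open>Laurent series \<open>\<Sum> a_i T^i\<close> represented by coefficient functions \<open>int \<Rightarrow> 'k\<close>.\<close>
definition in_EK :: "('k::field \<Rightarrow> real) \<Rightarrow> (int \<Rightarrow> 'k) \<Rightarrow> bool" where
  "in_EK av f \<longleftrightarrow> bdd_above (range (\<lambda>i. av (f i))) \<and> ((\<lambda>i. av (f i)) \<longlongrightarrow> 0) at_bot"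

definition gauss_norm :: "('k::field \<Rightarrow> real) \<Rightarrow> (int \<Rightarrow> 'k) \<Rightarrow> real" where
  "gauss_norm av f = (SUP i. av (f i))"

definition lmult :: "('k::field \<Rightarrow> real) \<Rightarrow> (int \<Rightarrow> 'k) \<Rightarrow> (int \<Rightarrow> 'k) \<Rightarrow> (int \<Rightarrow> 'k)" where
  "lmult av f g = (\<lambda>n. av_sum av (\<lambda>i. f i * g (n - i)))"

definition lderiv :: "(int \<Rightarrow> 'k::field) \<Rightarrow> (int \<Rightarrow> 'k)" where
  "lderiv f = (\<lambda>n. of_int (n + 1) * f (n + 1))"

definition ldivT :: "(int \<Rightarrow> 'k::field) \<Rightarrow> (int \<Rightarrow> 'k)" where
  "ldivT f = (\<lambda>n. f (n + 1))"

definition lone :: "int \<Rightarrow> 'k::field" where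
  "lone = (\<lambda>n. if n = 0 then 1 else 0)"

text \<open>\<open>g_[0] = 1\<close>, \<open>g_[k+1] = d/dT g_[k] + g_[k] g_[1]\<close>, with \<open>g_[1] = g/T\<close>
  (the recursion at \<open>k = 0\<close> gives exactly \<open>g/T\<close>).\<close>
primrec gbr :: "('k::field \<Rightarrow> real) \<Rightarrow> (int \<Rightarrow> 'k) \<Rightarrow> nat \<Rightarrow> (int \<Rightarrow> 'k)" where
  "gbr av g 0 = lone"
| "gbr av g (Suc k) = (\<lambda>n. lderiv (gbr av g k) n + lmult av (gbr av g k) (ldivT g) n)"

definition ray :: "('k::field \<Rightarrow> real) \<Rightarrow> (int \<Rightarrow> 'k) \<Rightarrow> ereal" where
  "ray av g = min 1 (liminf (\<lambda>k. if gauss_norm av (gbr av g k) = 0 then \<infinity>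
      else ereal ((gauss_norm av (gbr av g k) / av (of_nat (fact k))) powr (- 1 / real k))))"

end

theory Submission
  imports Defs
begin

locale nav =
  fixes av :: "'k::field_char_0 \<Rightarrow> real"
  assumes na: "nonarch_av av" and cmpl: "av_complete av"
begin

lemma av_nonneg[simp]: "0 \<le> av x" using na unfolding nonarch_av_def by blast
lemma av_zero_iff[simp]: "av x = 0 \<longleftrightarrow> x = 0" using na unfolding nonarch_av_def by blast
lemma av_mult[simp]: "av (x * y) = av x * av y" using na unfolding nonarch_av_def by blast
lemma av_add: "av (x + y) \<le> max (av x) (av y)" using na unfolding nonarch_av_def by blast
lemma av_0[simp]: "av 0 = 0" by simp
lemma av_1[simp]: "av 1 = 1"
proof -
  have "av 1 = av 1 * av 1" using av_mult[of 1 1] by simp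
  moreover have "av 1 \<noteq> 0" by simp
  ultimately show ?thesis by (metis mult_cancel_left1)
qed
lemma av_minus1: "av (-1) = 1"
proof -
  have "av (-1) * av (-1) = 1" using av_mult[of "-1" "-1"] by simp
  then have "(av (-1))^2 = 1" by (simp add: power2_eq_square)
  then have "av (-1) = 1 \<or> av (-1) = -1" by (simp only: power2_eq_1_iff)
  then show ?thesis using av_nonneg[of "-1"] by linarith
qed
lemma av_uminus[simp]: "av (- x) = av x"
  using av_mult[of "-1" x] av_minus1 by simp
lemma av_diff: "av (x - y) \<le> max (av x) (av y)"
  using av_add[of x "-y"] by simp
lemma av_diff_commute: "av (x - y) = av (y - x)"
  by (metis av_uminus minus_diff_eq)
lemma av_power[simp]: "av (x ^ n) = av x ^ n" by (induction n) auto
lemma av_pos: "x \<noteq> 0 \<Longrightarrow> 0 < av x" using av_nonneg[of x] av_zero_iff[of x] by linarith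

lemma av_add_le: "av x \<le> B \<Longrightarrow> av y \<le> B \<Longrightarrow> av (x + y) \<le> B"
  using av_add[of x y] by linarith
lemma av_add_less: "av x < B \<Longrightarrow> av y < B \<Longrightarrow> av (x + y) < B"
  using av_add[of x y] by linarith
lemma av_dom: "av y < av x \<Longrightarrow> av x \<le> av (x + y)"
proof -
  assume a: "av y < av x"
  have "av x \<le> max (av (x + y)) (av y)" using av_diff[of "x+y" y] by simp
  then show ?thesis using a by linarith
qed

lemma av_of_nat_le1: "av (of_nat n) \<le> 1"
  by (induction n) (auto intro: av_add_le)
lemma av_of_int_le1: "av (of_int z) \<le> 1"
proof (cases "z \<ge> 0")
  case True then show ?thesis using av_of_nat_le1[of "nat z"] by simp
next
  case False then have "of_int z = - (of_nat (nat (-z)) :: 'k)" by simp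
  then show ?thesis using av_of_nat_le1[of "nat (-z)"] by simp
qed

lemma av_sum_le: "finite A \<Longrightarrow> 0 \<le> B \<Longrightarrow> (\<And>i. i \<in> A \<Longrightarrow> av (c i) \<le> B) \<Longrightarrow> av (sum c A) \<le> B"
  by (induction A rule: finite_induct) (auto intro: av_add_le)

lemma tendsto_unique: "av_tendsto av X L1 \<Longrightarrow> av_tendsto av X L2 \<Longrightarrow> L1 = L2"
proof (rule ccontr)
  assume t1: "av_tendsto av X L1" and t2: "av_tendsto av X L2" and ne: "L1 \<noteq> L2"
  define e where "e = av (L1 - L2)"
  have e: "e > 0" using ne unfolding e_def by (simp add: av_pos)
  obtain N1 where N1: "\<forall>n\<ge>N1. av (X n - L1) < e" using t1 e unfolding av_tendsto_def by blast
  obtain N2 where N2: "\<forall>n\<ge>N2. av (X n - L2) < e" using t2 e unfolding av_tendsto_def by blast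
  define n where "n = max N1 N2"
  have "L1 - L2 = (X n - L2) - (X n - L1)" by simp
  then have "e \<le> max (av (X n - L2)) (av (X n - L1))" unfolding e_def by (metis av_diff)
  moreover have "av (X n - L1) < e" using N1 by (simp add: n_def)
  moreover have "av (X n - L2) < e" using N2 by (simp add: n_def)
  ultimately show False by linarith
qed


definition PS :: "(int \<Rightarrow> 'k) \<Rightarrow> nat \<Rightarrow> 'k" where
  "PS c N = (\<Sum>i\<in>{- int N..int N}. c i)"

definition nul :: "(int \<Rightarrow> 'k) \<Rightarrow> bool" where
  "nul c \<longleftrightarrow> (\<forall>e>0. \<exists>N::nat. \<forall>i. int N < \<bar>i\<bar> \<longrightarrow> av (c i) < e)"

lemma PS_diff: "n \<le> m \<Longrightarrow> PS c m - PS c n = sum c ({- int m..int m} - {- int n..int n})"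
  unfolding PS_def by (subst sum_diff) auto

lemma nul_conv: assumes "nul c" shows "av_tendsto av (PS c) (av_sum av c)"
proof -
  have cauchy: "\<forall>e>0. \<exists>N. \<forall>m\<ge>N. \<forall>n\<ge>N. av (PS c m - PS c n) < e"
  proof (intro allI impI)
    fix e :: real assume e: "e > 0"
    obtain N where N: "\<forall>i. int N < \<bar>i\<bar> \<longrightarrow> av (c i) < e/2" using assms e unfolding nul_def
      by (meson half_gt_zero)
    have key: "av (PS c m - PS c n) \<le> e/2" if "N \<le> n" "n \<le> m" for m n
    proof -
      have "av (sum c ({- int m..int m} - {- int n..int n})) \<le> e/2"
      proof (rule av_sum_le)
        fix i assume "i \<in> {- int m..int m} - {- int n..int n}"
        then have "int N < \<bar>i\<bar>" using that by auto
        then show "av (c i) \<le> e/2" using N by (simp add: less_imp_le)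
      qed (use e in auto)
      then show ?thesis using PS_diff[OF that(2)] by simp
    qed
    show "\<exists>N. \<forall>m\<ge>N. \<forall>n\<ge>N. av (PS c m - PS c n) < e"
    proof (intro exI allI impI)
      fix m n assume "N \<le> m" "N \<le> n"
      show "av (PS c m - PS c n) < e"
      proof (cases "n \<le> m")
        case True then show ?thesis using key[of n m] \<open>N \<le> n\<close> e by linarith
      next
        case False then have "av (PS c n - PS c m) \<le> e/2" using key[of m n] \<open>N \<le> m\<close> by simp
        then show ?thesis using e av_diff_commute[of "PS c m" "PS c n"] by linarith
      qed
    qed
  qed
  obtain L where L: "av_tendsto av (PS c) L" using cmpl cauchy unfolding av_complete_def by blast
  have "av_sum av c = L" unfolding av_sum_def
  proof (rule the_equality)
    show "av_tendsto av (\<lambda>N. \<Sum>i = - int N..int N. c i) L" using L unfolding PS_def .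
    show "\<And>L'. av_tendsto av (\<lambda>N. \<Sum>i = - int N..int N. c i) L' \<Longrightarrow> L' = L"
      using L tendsto_unique unfolding PS_def by blast
  qed
  then show ?thesis using L by simp
qed

lemma lim_bound: assumes "av_tendsto av (PS c) L" "\<And>i. av (c i) \<le> B" "0 \<le> B"
  shows "av L \<le> B"
proof (rule ccontr)
  assume "\<not> av L \<le> B"
  then have e: "av L - B > 0" by simp
  obtain N where N: "\<forall>n\<ge>N. av (PS c n - L) < av L - B" using assms(1) e unfolding av_tendsto_def by blast
  have "av (PS c N) \<le> B" unfolding PS_def by (rule av_sum_le) (use assms in auto)
  moreover have "av L \<le> max (av (PS c N)) (av (PS c N - L))"
    using av_diff[of "PS c N" "PS c N - L"] by simp
  moreover have "av (PS c N - L) < av L - B" using N by simp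
  ultimately show False using assms(3) e by (simp add: le_max_iff_disj)
qed

lemma nul_bound: "nul c \<Longrightarrow> (\<And>i. av (c i) \<le> B) \<Longrightarrow> 0 \<le> B \<Longrightarrow> av (av_sum av c) \<le> B"
  using lim_bound nul_conv by blast

lemma nul_strict: assumes "nul c" "\<And>i. av (c i) < B" shows "av (av_sum av c) < B"
proof -
  have B: "B > 0" using assms(2)[of 0] av_nonneg[of "c 0"] by linarith
  obtain N where N: "\<forall>i. int N < \<bar>i\<bar> \<longrightarrow> av (c i) < B/2" using assms(1) B unfolding nul_def
    by (meson half_gt_zero)
  define B' where "B' = max (B/2) (Max ((\<lambda>i. av (c i)) ` {- int N..int N}))"
  have fin: "finite ((\<lambda>i. av (c i)) ` {- int N..int N})" "(\<lambda>i. av (c i)) ` {- int N..int N} \<noteq> {}" by auto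
  have "Max ((\<lambda>i. av (c i)) ` {- int N..int N}) < B"
    using fin assms(2) by (subst Max_less_iff) auto
  then have B'B: "B' < B" unfolding B'_def using B by simp
  have "av (c i) \<le> B'" for i
  proof (cases "\<bar>i\<bar> \<le> int N")
    case True then have "i \<in> {- int N..int N}" by auto
    then have "av (c i) \<le> Max ((\<lambda>i. av (c i)) ` {- int N..int N})" using fin by (intro Max_ge) auto
    then show ?thesis unfolding B'_def by linarith
  next
    case False then have "av (c i) < B/2" using N by auto
    then show ?thesis unfolding B'_def by (simp add: le_max_iff_disj)
  qed
  then have "av (av_sum av c) \<le> B'" using nul_bound[OF assms(1)] B unfolding B'_def by fastforce
  then show ?thesis using B'B by linarith
qed

lemma nul_upd: "nul c \<Longrightarrow> nul (c(i0 := 0))"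
  unfolding nul_def by (metis av_0 av_nonneg fun_upd_apply le_less_trans)

lemma av_sum_split: assumes "nul c" shows "av_sum av c = c i0 + av_sum av (c(i0 := 0))"
proof -
  have t: "av_tendsto av (PS (c(i0:=0))) (av_sum av (c(i0 := 0)))" using nul_conv nul_upd assms by blast
  have t2: "av_tendsto av (PS c) (c i0 + av_sum av (c(i0 := 0)))"
    unfolding av_tendsto_def
  proof (intro allI impI)
    fix e :: real assume "e > 0"
    then obtain N where N: "\<forall>n\<ge>N. av (PS (c(i0:=0)) n - av_sum av (c(i0 := 0))) < e"
      using t unfolding av_tendsto_def by blast
    show "\<exists>N. \<forall>n\<ge>N. av (PS c n - (c i0 + av_sum av (c(i0 := 0)))) < e"
    proof (intro exI allI impI)
      fix n assume n: "max N (nat \<bar>i0\<bar>) \<le> n"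
      then have "i0 \<in> {- int n..int n}" by auto
      then have "PS c n = c i0 + PS (c(i0:=0)) n" unfolding PS_def
        by (simp add: sum.remove[of _ i0] sum.If_cases)
      then show "av (PS c n - (c i0 + av_sum av (c(i0 := 0)))) < e" using N n by (simp add: algebra_simps)
    qed
  qed
  show ?thesis using tendsto_unique[OF nul_conv[OF assms] t2] .
qed


lemma mul_lt: fixes x y a B :: real
  assumes "0 \<le> x" "x < a/B" "0 \<le> y" "y \<le> B" "B > 0" shows "x * y < a"
proof -
  have "x * y \<le> x * B" using assms by (simp add: mult_left_mono)
  also have "\<dots> < a" using assms by (simp add: pos_less_divide_eq)
  finally show ?thesis .
qed

lemma mul_le: fixes x y a B :: real
  assumes "0 \<le> x" "x \<le> a/B" "0 \<le> y" "y \<le> B" "B > 0" shows "x * y \<le> a"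
proof -
  have "x * y \<le> x * B" using assms by (simp add: mult_left_mono)
  also have "\<dots> \<le> a" using assms by (simp add: pos_le_divide_eq)
  finally show ?thesis .
qed

definition tl0 :: "(int \<Rightarrow> 'k) \<Rightarrow> bool" where
  "tl0 f \<longleftrightarrow> (\<forall>e>0. \<exists>N. \<forall>i<N. av (f i) < e)"

definition ek :: "(int \<Rightarrow> 'k) \<Rightarrow> bool" where
  "ek f \<longleftrightarrow> (\<exists>B. \<forall>i. av (f i) \<le> B) \<and> tl0 f"

lemma ek_bnd: assumes "ek f" obtains B where "B > 0" "\<And>i. av (f i) \<le> B"
proof -
  obtain B where B: "\<forall>i. av (f i) \<le> B" using assms unfolding ek_def by blast
  have "B \<ge> 0" using B av_nonneg[of "f 0"] by (meson order_trans)
  then have "B + 1 > 0" by simp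
  moreover have "\<And>i. av (f i) \<le> B + 1" using B by (smt (verit))
  ultimately show ?thesis using that by blast
qed

lemma ek_tl: "ek f \<Longrightarrow> e > 0 \<Longrightarrow> \<exists>N. \<forall>i<N. av (f i) < e"
  unfolding ek_def tl0_def by blast

lemma in_EK_ek: assumes "in_EK av a" shows "ek a"
proof -
  have b: "bdd_above (range (\<lambda>i. av (a i)))" and t: "((\<lambda>i. av (a i)) \<longlongrightarrow> 0) at_bot"
    using assms unfolding in_EK_def by auto
  have "\<exists>B. \<forall>i. av (a i) \<le> B" using b by (auto simp: bdd_above_def)
  moreover have "tl0 a" unfolding tl0_def
  proof (intro allI impI)
    fix e :: real assume "e > 0"
    then have "eventually (\<lambda>i. dist (av (a i)) 0 < e) at_bot" using tendstoD[OF t] by blast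
    then obtain N where "\<forall>i\<le>N. dist (av (a i)) 0 < e" by (auto simp: eventually_at_bot_linorder)
    then show "\<exists>N. \<forall>i<N. av (a i) < e" by (intro exI[of _ N]) auto
  qed
  ultimately show ?thesis unfolding ek_def by blast
qed

lemma prod_nul: assumes "ek f" "ek b" shows "nul (\<lambda>i. f i * b (n - i))"
  unfolding nul_def
proof (intro allI impI)
  fix e :: real assume e: "e > 0"
  obtain Bf where Bf: "Bf > 0" "\<And>i. av (f i) \<le> Bf" using ek_bnd[OF assms(1)] by blast
  obtain Bb where Bb: "Bb > 0" "\<And>i. av (b i) \<le> Bb" using ek_bnd[OF assms(2)] by blast
  obtain N1 where N1: "\<forall>i<N1. av (f i) < e/Bb" using ek_tl[OF assms(1), of "e/Bb"] e Bb by auto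
  obtain N2 where N2: "\<forall>i<N2. av (b i) < e/Bf" using ek_tl[OF assms(2), of "e/Bf"] e Bf by auto
  define N where "N = nat (max \<bar>N1\<bar> \<bar>n - N2\<bar>)"
  show "\<exists>N::nat. \<forall>i. int N < \<bar>i\<bar> \<longrightarrow> av (f i * b (n - i)) < e"
  proof (intro exI[of _ N] allI impI)
    fix i assume i: "int N < \<bar>i\<bar>"
    show "av (f i * b (n - i)) < e"
    proof (cases "i < 0")
      case True
      then have "i < N1" using i unfolding N_def by linarith
      then show ?thesis using N1 Bb mul_lt[where x="av (f i)" and y="av (b (n-i))" and a=e and B=Bb] by simp
    next
      case False
      then have "n - i < N2" using i unfolding N_def by linarith
      then have "av (b (n - i)) * av (f i) < e" using N2 Bf mul_lt[where y="av (f i)" and x="av (b (n-i))" and a=e and B=Bf] by simp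
      then show ?thesis by (simp add: mult.commute)
    qed
  qed
qed

lemma ek_lmult: assumes "ek f" "ek b" shows "ek (lmult av f b)"
proof -
  obtain Bf where Bf: "Bf > 0" "\<And>i. av (f i) \<le> Bf" using ek_bnd[OF assms(1)] by blast
  obtain Bb where Bb: "Bb > 0" "\<And>i. av (b i) \<le> Bb" using ek_bnd[OF assms(2)] by blast
  have "av (lmult av f b n) \<le> Bf * Bb" for n
    unfolding lmult_def using prod_nul[OF assms] Bf Bb
    by (intro nul_bound) (auto intro: mult_mono)
  moreover have "tl0 (lmult av f b)" unfolding tl0_def
  proof (intro allI impI)
    fix e :: real assume e: "e > 0"
    obtain N1 where N1: "\<forall>i<N1. av (f i) < (e/2)/Bb" using ek_tl[OF assms(1), of "(e/2)/Bb"] e Bb by auto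
    obtain N2 where N2: "\<forall>i<N2. av (b i) < (e/2)/Bf" using ek_tl[OF assms(2), of "(e/2)/Bf"] e Bf by auto
    show "\<exists>N. \<forall>n<N. av (lmult av f b n) < e"
    proof (intro exI[of _ "N1 + N2"] allI impI)
      fix n assume n: "n < N1 + N2"
      have "av (f i * b (n - i)) \<le> e/2" for i
      proof (cases "i < N1")
        case True then have "av (f i) \<le> (e/2)/Bb" using N1 by (simp add: less_imp_le)
        then show ?thesis using Bb mul_le[where x="av (f i)" and y="av (b (n-i))" and a="e/2" and B=Bb] by simp
      next
        case False
        then have "n - i < N2" using n by linarith
        then have "av (b (n-i)) \<le> (e/2)/Bf" using N2 by (simp add: less_imp_le)
        then have "av (b (n - i)) * av (f i) \<le> e/2" using Bf mul_le[where y="av (f i)" and x="av (b (n-i))" and a="e/2" and B=Bf] by simp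
        then show ?thesis by (simp add: mult.commute)
      qed
      then have "av (lmult av f b n) \<le> e/2" unfolding lmult_def using prod_nul[OF assms] e
        by (intro nul_bound) auto
      then show "av (lmult av f b n) < e" using e by linarith
    qed
  qed
  ultimately show ?thesis unfolding ek_def by blast
qed

lemma ek_lderiv: assumes "ek f" shows "ek (lderiv f)"
proof -
  obtain B where B: "B > 0" "\<And>i. av (f i) \<le> B" using ek_bnd[OF assms] by blast
  have le: "av (lderiv f n) \<le> av (f (n + 1))" for n
    unfolding lderiv_def using av_of_int_le1[of "n+1"] by (simp add: mult_left_le_one_le)
  have "av (lderiv f n) \<le> B" for n using le[of n] B(2)[of "n+1"] by linarith
  moreover have "tl0 (lderiv f)" unfolding tl0_def
  proof (intro allI impI)
    fix e :: real assume "e > 0"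
    then obtain N where "\<forall>i<N. av (f i) < e" using ek_tl[OF assms] by blast
    then show "\<exists>N. \<forall>i<N. av (lderiv f i) < e"
      by (intro exI[of _ "N - 1"]) (smt (verit) le)
  qed
  ultimately show ?thesis unfolding ek_def by blast
qed

lemma ek_ldivT: assumes "ek f" shows "ek (ldivT f)"
proof -
  have "\<exists>B. \<forall>i. av (ldivT f i) \<le> B" using assms unfolding ek_def ldivT_def by blast
  moreover have "tl0 (ldivT f)" unfolding tl0_def ldivT_def
  proof (intro allI impI)
    fix e :: real assume "e > 0"
    then obtain N where "\<forall>i<N. av (f i) < e" using ek_tl[OF assms] by blast
    then show "\<exists>N. \<forall>i<N. av (f (i+1)) < e" by (intro exI[of _ "N - 1"]) auto
  qed
  ultimately show ?thesis unfolding ek_def by blast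
qed

lemma ek_add: assumes "ek f" "ek g" shows "ek (\<lambda>n. f n + g n)"
proof -
  obtain Bf where Bf: "Bf > 0" "\<And>i. av (f i) \<le> Bf" using ek_bnd[OF assms(1)] by blast
  obtain Bg where Bg: "Bg > 0" "\<And>i. av (g i) \<le> Bg" using ek_bnd[OF assms(2)] by blast
  have "av (f i + g i) \<le> max Bf Bg" for i using Bf Bg by (intro av_add_le) (auto simp: le_max_iff_disj)
  moreover have "tl0 (\<lambda>n. f n + g n)" unfolding tl0_def
  proof (intro allI impI)
    fix e :: real assume "e > 0"
    then obtain N1 N2 where "\<forall>i<N1. av (f i) < e" "\<forall>i<N2. av (g i) < e" using ek_tl assms by blast
    then show "\<exists>N. \<forall>i<N. av (f i + g i) < e" by (intro exI[of _ "min N1 N2"]) (auto intro: av_add_less)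
  qed
  ultimately show ?thesis unfolding ek_def by blast
qed

lemma ek_lone: "ek lone"
proof -
  have "\<forall>i. av (lone i :: 'k) \<le> 1" unfolding lone_def by simp
  moreover have "tl0 (lone :: int \<Rightarrow> 'k)" unfolding tl0_def lone_def
    by (intro allI impI exI[of _ 0]) auto
  ultimately show ?thesis unfolding ek_def by blast
qed

lemma ek_gbr: assumes "ek a" shows "ek (gbr av a k)"
  by (induction k) (auto simp: ek_lone intro!: ek_add ek_lderiv ek_lmult ek_ldivT assms)

lemma gn_ge: "ek f \<Longrightarrow> av (f i) \<le> gauss_norm av f"
  unfolding gauss_norm_def ek_def by (intro cSUP_upper) (auto simp: bdd_above_def)

lemma gn_le: "(\<And>i. av (f i) \<le> B) \<Longrightarrow> gauss_norm av f \<le> B"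
  unfolding gauss_norm_def by (intro cSUP_least) auto


lemma prod_le1: "av x \<le> 1 \<Longrightarrow> av y \<le> 1 \<Longrightarrow> av (x * y) \<le> 1"
  by (simp add: mult_le_one)
lemma prod_lt1: "av x < 1 \<Longrightarrow> av y \<le> 1 \<Longrightarrow> av (x * y) < 1"
proof -
  assume a: "av x < 1" "av y \<le> 1"
  have "av y * av x \<le> av x" using a by (intro mult_left_le_one_le) auto
  then show ?thesis using a by (simp add: mult.commute)
qed
lemma prod_lt1': "av x \<le> 1 \<Longrightarrow> av y < 1 \<Longrightarrow> av (x * y) < 1"
  using prod_lt1[of y x] by (simp add: mult.commute)

lemma caseA_ind:
  assumes ek: "ek a" and le1: "\<And>i. av (a i) \<le> 1" and m: "m \<le> -1" and am: "av (a m) = 1"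
    and below: "\<And>i. i < m \<Longrightarrow> av (a i) < 1"
  shows "(\<forall>i. av (gbr av a k i) \<le> 1) \<and> (\<forall>i < int k * (m - 1). av (gbr av a k i) < 1)
     \<and> av (gbr av a k (int k * (m - 1)) - (a m)^k) < 1"
proof (induction k)
  case 0
  show ?case by (simp add: lone_def)
next
  case (Suc k)
  define f where "f = gbr av a k"
  define b where "b = ldivT a"
  define \<mu> where "\<mu> = m - 1"
  have mu: "\<mu> \<le> -2" using m unfolding \<mu>_def by simp
  have ekf: "ek f" unfolding f_def using ek_gbr[OF ek] .
  have ekb: "ek b" unfolding b_def using ek_ldivT[OF ek] .
  have IH1: "\<And>i. av (f i) \<le> 1" and IH2: "\<And>i. i < int k * \<mu> \<Longrightarrow> av (f i) < 1"
    and IH3: "av (f (int k * \<mu>) - (a m)^k) < 1" using Suc.IH unfolding f_def \<mu>_def by auto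
  have b1: "\<And>i. av (b i) \<le> 1" unfolding b_def ldivT_def using le1 by simp
  have b2: "\<And>i. i < \<mu> \<Longrightarrow> av (b i) < 1" unfolding b_def ldivT_def \<mu>_def using below by simp
  have bmu: "b \<mu> = a m" unfolding b_def ldivT_def \<mu>_def by simp
  have step: "gbr av a (Suc k) n = of_int (n+1) * f (n+1) + av_sum av (\<lambda>i. f i * b (n - i))" for n
    by (simp add: f_def b_def lderiv_def lmult_def)
  have nul: "nul (\<lambda>i. f i * b (n - i))" for n using prod_nul[OF ekf ekb] .
  have d1: "av (of_int (n+1) * f (n+1)) \<le> 1" for n using av_of_int_le1 IH1 by (intro prod_le1)
  have d2: "av (of_int (n+1) * f (n+1)) < 1" if "n \<le> int (Suc k) * \<mu>" for n
  proof -
    have "n + 1 < int k * \<mu>" using that mu by (simp add: algebra_simps)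
    then have "av (f (n+1)) < 1" using IH2 by blast
    then show ?thesis by (rule prod_lt1'[OF av_of_int_le1])
  qed
  have A: "av (gbr av a (Suc k) n) \<le> 1" for n
  proof -
    have "av (av_sum av (\<lambda>i. f i * b (n - i))) \<le> 1"
      using nul IH1 b1 by (intro nul_bound) (auto intro: mult_le_one)
    then show ?thesis unfolding step using d1 by (intro av_add_le)
  qed
  have tlt: "av (f i * b (n - i)) < 1" if "i \<noteq> int k * \<mu>" "n \<le> int (Suc k) * \<mu>" for i n
  proof (cases "i < int k * \<mu>")
    case True then show ?thesis using IH2 b1 by (intro prod_lt1) auto
  next
    case False
    then have "n - i < \<mu>" using that by (simp add: algebra_simps)
    then show ?thesis using IH1 b2 by (intro prod_lt1') auto
  qed
  have B: "av (gbr av a (Suc k) n) < 1" if "n < int (Suc k) * \<mu>" for n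
  proof -
    have "av (f i * b (n - i)) < 1" for i
    proof (cases "i = int k * \<mu>")
      case True
      then have "n - i < \<mu>" using that by (simp add: algebra_simps)
      then show ?thesis using IH1 b2 by (intro prod_lt1') auto
    next
      case False then show ?thesis using tlt that by simp
    qed
    then have "av (av_sum av (\<lambda>i. f i * b (n - i))) < 1" using nul by (intro nul_strict)
    then show ?thesis unfolding step using d2 that by (intro av_add_less) auto
  qed
  have C: "av (gbr av a (Suc k) (int (Suc k) * \<mu>) - (a m)^(Suc k)) < 1"
  proof -
    define n where "n = int (Suc k) * \<mu>"
    define i0 where "i0 = int k * \<mu>"
    have ni0: "n - i0 = \<mu>" unfolding n_def i0_def by (simp add: algebra_simps)
    define r where "r = ((\<lambda>i. f i * b (n - i))(i0 := 0))"
    have split: "av_sum av (\<lambda>i. f i * b (n - i)) = f i0 * a m + av_sum av r"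
      unfolding r_def using av_sum_split[OF nul, of n i0] ni0 bmu by simp
    have "av (r i) < 1" for i unfolding r_def using tlt[of i n] by (cases "i = i0") (auto simp: n_def i0_def)
    then have rs: "av (av_sum av r) < 1" using nul_upd[OF nul] unfolding r_def by (intro nul_strict) auto
    have "gbr av a (Suc k) n - (a m)^(Suc k) =
        of_int (n+1) * f (n+1) + ((f i0 - (a m)^k) * a m + av_sum av r)"
      unfolding step split by (simp add: algebra_simps)
    moreover have "av ((f i0 - (a m)^k) * a m) < 1" using IH3 am unfolding i0_def by simp
    ultimately have "av (gbr av a (Suc k) n - (a m)^(Suc k)) < 1"
      using d2[of n] rs unfolding n_def by (auto intro!: av_add_less)
    then show ?thesis unfolding n_def .
  qed
  show ?case using A B C unfolding \<mu>_def by auto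
qed

lemma caseA:
  assumes ek: "ek a" and le1: "\<And>i. av (a i) \<le> 1" and m: "m \<le> -1" and am: "av (a m) = 1"
    and below: "\<And>i. i < m \<Longrightarrow> av (a i) < 1"
  shows "gauss_norm av (gbr av a k) \<ge> 1"
proof -
  define x where "x = gbr av a k (int k * (m - 1))"
  have "av (x - (a m)^k) < 1" using caseA_ind[OF assms, of k] unfolding x_def by blast
  moreover have "av ((a m)^k) = 1" using am by simp
  moreover have "(a m)^k = x - (x - (a m)^k)" by simp
  ultimately have "1 \<le> max (av x) (av (x - (a m)^k))" using av_diff[of x "x - (a m)^k"] by metis
  then have "1 \<le> av x" using \<open>av (x - (a m)^k) < 1\<close> by (simp add: le_max_iff_disj)
  also have "\<dots> \<le> gauss_norm av (gbr av a k)" unfolding x_def using gn_ge ek_gbr[OF ek] by blast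
  finally show ?thesis .
qed


end


lemma seq_argmax:
  fixes w :: "nat \<Rightarrow> real"
  assumes lim: "w \<longlonglongrightarrow> 0" and pos: "w k > 0"
  shows "\<exists>I. (\<forall>i. w i \<le> w I) \<and> (\<forall>i<I. w i < w I)"
proof -
  obtain N0 where N0: "\<And>n. n \<ge> N0 \<Longrightarrow> norm (w n - 0) < w k"
    using LIMSEQ_D[OF lim pos] by blast
  have N0': "\<And>n. n \<ge> N0 \<Longrightarrow> w n < w k"
  proof -
    fix n :: nat assume "n \<ge> N0"
    then have "norm (w n - 0) < w k" by (rule N0)
    then have "\<bar>w n\<bar> < w k" by simp
    then show "w n < w k" by (meson abs_ge_self le_less_trans)
  qed
  define W where "W = Max (w ` {..N0})"
  have fin: "finite (w ` {..N0})" "w ` {..N0} \<noteq> {}" by auto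
  have kN: "k \<le> N0"
  proof (rule ccontr)
    assume "\<not> k \<le> N0"
    then have "k \<ge> N0" by simp
    then have "w k < w k" by (rule N0')
    then show False by simp
  qed
  have bound: "w i \<le> W" for i
  proof (cases "i \<le> N0")
    case True then have "w i \<in> w ` {..N0}" by simp
    then show ?thesis unfolding W_def using fin(1) by (rule Max_ge[rotated])
  next
    case False
    then have "i \<ge> N0" by simp
    then have "w i < w k" by (rule N0')
    moreover have "w k \<in> w ` {..N0}" using kN by simp
    then have "w k \<le> W" unfolding W_def using fin(1) by (rule Max_ge[rotated])
    ultimately show ?thesis by linarith
  qed
  have "W \<in> w ` {..N0}" unfolding W_def using fin by (rule Max_in)
  then obtain I' where wI': "w I' = W" by blast
  define I where "I = (LEAST I. w I = W)"
  have wI: "w I = W" unfolding I_def using wI' by (rule LeastI)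
  have "\<forall>i<I. w i < w I"
  proof (intro allI impI)
    fix i assume "i < I"
    then have "w i \<noteq> W" unfolding I_def by (rule not_less_Least)
    then show "w i < w I" using bound[of i] wI by linarith
  qed
  then show ?thesis using bound wI by auto
qed

context nav begin

lemma gn_nonneg: "ek f \<Longrightarrow> 0 \<le> gauss_norm av f"
  using gn_ge[of f 0] av_nonneg[of "f 0"] by linarith

lemma gn_exceed: assumes "ek f" "s < gauss_norm av f" shows "\<exists>i. s < av (f i)"
proof -
  have "bdd_above (range (\<lambda>i. av (f i)))" using assms(1) unfolding ek_def by (auto simp: bdd_above_def)
  then show ?thesis using assms(2) unfolding gauss_norm_def by (subst (asm) less_cSUP_iff) auto
qed

lemma mult_approx:
  assumes ekf: "ek f" and ekb: "ek b" and t: "0 < t" "t < 1"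
    and F: "gauss_norm av f > 0" and G: "gauss_norm av b > 0"
  shows "\<exists>n. av (lmult av f b n) \<ge> t^4 * gauss_norm av f * gauss_norm av b"
proof -
  define Fn where "Fn = gauss_norm av f"
  define Gn where "Gn = gauss_norm av b"
  define \<delta> where "\<delta> = t^4 / 2"
  have "t^4 \<le> t^1" by (rule power_decreasing) (use t in auto)
  then have t4: "t^4 \<le> t" by simp
  have t4pos: "t^4 > 0" using t by simp
  have dpos: "\<delta> > 0" and dlt: "\<delta> < t^4" and dt: "\<delta> \<le> t" using t4 t4pos unfolding \<delta>_def by linarith+
  obtain N1 where N1: "\<forall>i<N1. av (f i) < \<delta> * Fn" using ek_tl[OF ekf, of "\<delta> * Fn"] dpos F unfolding Fn_def by auto
  obtain N2 where N2: "\<forall>i<N2. av (b i) < \<delta> * Gn" using ek_tl[OF ekb, of "\<delta> * Gn"] dpos G unfolding Gn_def by auto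
  define N where "N = min N1 N2"
  have fF: "av (f i) \<le> Fn" for i unfolding Fn_def using gn_ge[OF ekf] .
  have bG: "av (b i) \<le> Gn" for i unfolding Gn_def using gn_ge[OF ekb] .
  obtain i1 where i1: "t * Fn < av (f i1)" using gn_exceed[OF ekf, of "t * Fn"] F t unfolding Fn_def by auto
  obtain j1 where j1: "t * Gn < av (b j1)" using gn_exceed[OF ekb, of "t * Gn"] G t unfolding Gn_def by auto
  have "i1 \<ge> N"
  proof (rule ccontr)
    assume "\<not> i1 \<ge> N" then have "av (f i1) < \<delta> * Fn" using N1 unfolding N_def by auto
    moreover have "\<delta> * Fn \<le> t * Fn" using dt F unfolding Fn_def by (simp add: mult_right_mono)
    ultimately show False using i1 by linarith
  qed
  have "j1 \<ge> N"
  proof (rule ccontr)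
    assume "\<not> j1 \<ge> N" then have "av (b j1) < \<delta> * Gn" using N2 unfolding N_def by auto
    moreover have "\<delta> * Gn \<le> t * Gn" using dt G unfolding Gn_def by (simp add: mult_right_mono)
    ultimately show False using j1 by linarith
  qed
  define u where "u = (\<lambda>i::nat. f (N + int i))"
  define v where "v = (\<lambda>i::nat. b (N + int i))"
  define I1 where "I1 = nat (i1 - N)"
  define J1 where "J1 = nat (j1 - N)"
  have uI1: "t * Fn < av (u I1)" unfolding u_def I1_def using i1 \<open>i1 \<ge> N\<close> by simp
  have vJ1: "t * Gn < av (v J1)" unfolding v_def J1_def using j1 \<open>j1 \<ge> N\<close> by simp
  define D where "D = I1 + J1 + 1"
  define r where "r = root D t"
  have Dpos: "D > 0" unfolding D_def by simp
  have r0: "r > 0" unfolding r_def using Dpos t by (simp add: real_root_gt_zero)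
  have r1: "r < 1" unfolding r_def using Dpos t by simp
  have rD: "r ^ D = t" unfolding r_def using Dpos t by simp
  have rI1: "r ^ I1 \<ge> t" using power_decreasing[of I1 D r] r0 r1 rD unfolding D_def by simp
  have rJ1: "r ^ J1 \<ge> t" using power_decreasing[of J1 D r] r0 r1 rD unfolding D_def by simp
  define w where "w = (\<lambda>i. av (u i) * r ^ i)"
  define w' where "w' = (\<lambda>i. av (v i) * r ^ i)"
  have wlim: "w \<longlonglongrightarrow> 0"
  proof (rule tendsto_sandwich[of "\<lambda>_. 0" _ _ "\<lambda>i. Fn * r ^ i"])
    show "\<forall>\<^sub>F n in sequentially. 0 \<le> w n" unfolding w_def using r0 by simp
    show "\<forall>\<^sub>F n in sequentially. w n \<le> Fn * r ^ n" unfolding w_def u_def using r0 fF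
      by (intro always_eventually allI mult_right_mono) auto
    show "(\<lambda>i. Fn * r ^ i) \<longlonglongrightarrow> 0" using r0 r1 by (intro tendsto_mult_right_zero LIMSEQ_power_zero) simp
  qed simp
  have wlim': "w' \<longlonglongrightarrow> 0"
  proof (rule tendsto_sandwich[of "\<lambda>_. 0" _ _ "\<lambda>i. Gn * r ^ i"])
    show "\<forall>\<^sub>F n in sequentially. 0 \<le> w' n" unfolding w'_def using r0 by simp
    show "\<forall>\<^sub>F n in sequentially. w' n \<le> Gn * r ^ n" unfolding w'_def v_def using r0 bG
      by (intro always_eventually allI mult_right_mono) auto
    show "(\<lambda>i. Gn * r ^ i) \<longlonglongrightarrow> 0" using r0 r1 by (intro tendsto_mult_right_zero LIMSEQ_power_zero) simp
  qed simp
  have wI1: "w I1 \<ge> t * Fn * t" unfolding w_def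
    using uI1 rI1 t F unfolding Fn_def by (intro mult_mono) auto
  have wJ1: "w' J1 \<ge> t * Gn * t" unfolding w'_def
    using vJ1 rJ1 t G unfolding Gn_def by (intro mult_mono) auto
  have "t * Fn * t > 0" using t F unfolding Fn_def by simp
  then have wI1p: "w I1 > 0" using wI1 by linarith
  have "t * Gn * t > 0" using t G unfolding Gn_def by simp
  then have wJ1p: "w' J1 > 0" using wJ1 by linarith
  obtain I0 where I0: "\<forall>i. w i \<le> w I0" "\<forall>i<I0. w i < w I0" using seq_argmax[OF wlim wI1p] by blast
  obtain J0 where J0: "\<forall>i. w' i \<le> w' J0" "\<forall>i<J0. w' i < w' J0" using seq_argmax[OF wlim' wJ1p] by blast
  have Wp: "w I0 > 0" using I0 wI1p by (meson less_le_trans)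
  have Wp': "w' J0 > 0" using J0 wJ1p by (meson less_le_trans)
  define n0 where "n0 = I0 + J0"
  define n where "n = 2 * N + int n0"
  define i0 where "i0 = N + int I0"
  define main where "main = f i0 * b (n - i0)"
  have main_eq: "main = u I0 * v J0" unfolding main_def u_def v_def i0_def n_def n0_def by (simp add: algebra_simps)
  have main_r: "av main * r ^ n0 = w I0 * w' J0" unfolding main_eq w_def w'_def n0_def by (simp add: power_add algebra_simps)
  have rn0: "r ^ n0 \<le> 1" "r ^ n0 > 0" using r0 r1 by (auto simp: power_le_one)
  have "w I0 * w' J0 \<ge> (t * Fn * t) * (t * Gn * t)"
    using I0(1)[rule_format, of I1] J0(1)[rule_format, of J1] wI1 wJ1 t F G Wp Wp' unfolding Fn_def Gn_def
    by (intro mult_mono) auto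
  moreover have "(t * Fn * t) * (t * Gn * t) = t^4 * Fn * Gn"
    by (simp add: power4_eq_xxxx mult.commute mult.left_commute mult.assoc)
  ultimately have "av main * r ^ n0 \<ge> t^4 * Fn * Gn" using main_r by simp
  moreover have "av main \<ge> av main * r ^ n0" using rn0 by (intro mult_right_le_one_le) auto
  ultimately have mainbig: "av main \<ge> t^4 * Fn * Gn" by linarith
  have FGp: "Fn * Gn > 0" using F G unfolding Fn_def Gn_def by simp
  have others: "av (f i * b (n - i)) < av main" if "i \<noteq> i0" for i
  proof (cases "i < N")
    case True
    then have h: "av (f i) < \<delta> * Fn" using N1 unfolding N_def by auto
    have h2: "0 \<le> \<delta> * Fn" using dpos F unfolding Fn_def by simp
    have "av (f i) * av (b (n - i)) \<le> (\<delta> * Fn) * av (b (n - i))"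
      by (rule mult_right_mono[OF less_imp_le[OF h] av_nonneg])
    also have "\<dots> \<le> (\<delta> * Fn) * Gn" by (rule mult_left_mono[OF bG h2])
    finally have "av (f i) * av (b (n - i)) \<le> (\<delta> * Fn) * Gn" .
    moreover have "\<delta> * Fn * Gn < t^4 * Fn * Gn"
      using mult_strict_right_mono[OF dlt FGp] by (simp only: mult.assoc)
    ultimately have "av (f i) * av (b (n - i)) < av main" using mainbig by linarith
    then show ?thesis by simp
  next
    case False
    show ?thesis
    proof (cases "n - i < N")
      case True
      then have "av (b (n - i)) < \<delta> * Gn" using N2 unfolding N_def by auto
      then have h: "av (b (n - i)) \<le> \<delta> * Gn" by simp
      have h2: "0 \<le> Fn" using F unfolding Fn_def by simp
      have "av (f i) * av (b (n - i)) \<le> av (f i) * (\<delta> * Gn)"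
        by (rule mult_left_mono[OF h av_nonneg])
      also have "\<dots> \<le> Fn * (\<delta> * Gn)" using dpos G unfolding Gn_def by (intro mult_right_mono[OF fF]) simp
      finally have "av (f i) * av (b (n - i)) \<le> Fn * (\<delta> * Gn)" .
      moreover have "Fn * (\<delta> * Gn) < t^4 * Fn * Gn"
        using mult_strict_right_mono[OF dlt FGp] by (simp only: mult.assoc mult.commute mult.left_commute)
      ultimately have "av (f i) * av (b (n - i)) < av main" using mainbig by linarith
      then show ?thesis by simp
    next
      case False2: False
      define i' where "i' = nat (i - N)"
      define j' where "j' = nat (n - i - N)"
      have "int (i' + j') = int n0" using False False2 by (simp add: i'_def j'_def n_def)
      then have ij: "i' + j' = n0" by (simp only: of_nat_eq_iff)
      have fi: "f i = u i'" unfolding u_def i'_def using False by simp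
      have bi: "b (n - i) = v j'" unfolding v_def j'_def using False2 by simp
      have ne: "i' \<noteq> I0" using that False unfolding i'_def i0_def by auto
      have lt: "w i' * w' j' < w I0 * w' J0"
      proof (cases "i' < I0")
        case True
        then have "w i' < w I0" using I0(2) by blast
        moreover have "0 \<le> w' j'" unfolding w'_def using r0 by simp
        moreover have "w' j' \<le> w' J0" using J0(1) by blast
        moreover have "w i' \<ge> 0" unfolding w_def using r0 by simp
        ultimately have "w i' * w' j' \<le> w i' * w' J0" by (simp add: mult_left_mono)
        also have "\<dots> < w I0 * w' J0" using \<open>w i' < w I0\<close> Wp' by simp
        finally show ?thesis .
      next
        case False
        then have "j' < J0" using ne ij unfolding n0_def by linarith
        then have "w' j' < w' J0" using J0(2) by blast
        moreover have "0 \<le> w i'" unfolding w_def using r0 by simp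
        moreover have "w i' \<le> w I0" using I0(1) by blast
        moreover have "0 \<le> w' j'" unfolding w'_def using r0 by simp
        ultimately have "w i' * w' j' \<le> w I0 * w' j'" by (simp add: mult_right_mono)
        also have "\<dots> < w I0 * w' J0" using \<open>w' j' < w' J0\<close> Wp by simp
        finally show ?thesis .
      qed
      have "av (f i * b (n - i)) * r ^ n0 = w i' * w' j'" unfolding fi bi w_def w'_def ij[symmetric]
        by (simp add: power_add algebra_simps)
      then have "av (f i * b (n - i)) * r ^ n0 < av main * r ^ n0" using lt main_r by simp
      then show ?thesis using rn0 by simp
    qed
  qed
  define rest where "rest = ((\<lambda>i. f i * b (n - i))(i0 := 0))"
  have "t^4 * Fn * Gn > 0" using t4pos FGp by (simp add: mult.assoc)
  then have mpos: "av main > 0" using mainbig by linarith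
  have "av (rest i) < av main" for i unfolding rest_def using others[of i] mpos by (cases "i = i0") auto
  then have rs: "av (av_sum av rest) < av main" using nul_upd[OF prod_nul[OF ekf ekb]] unfolding rest_def
    by (intro nul_strict) auto
  have "lmult av f b n = main + av_sum av rest"
    unfolding lmult_def rest_def main_def using av_sum_split[OF prod_nul[OF ekf ekb], of n i0] by simp
  then have "av (lmult av f b n) \<ge> av main" using av_dom[OF rs] by simp
  then show ?thesis using mainbig unfolding Fn_def Gn_def by (intro exI[of _ n]) linarith
qed

end


context nav begin

lemma gn_mult: assumes ekf: "ek f" and ekb: "ek b"
  shows "gauss_norm av f * gauss_norm av b \<le> gauss_norm av (lmult av f b)"
proof (cases "gauss_norm av f > 0 \<and> gauss_norm av b > 0")
  case False
  then have z: "gauss_norm av f * gauss_norm av b = 0"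
    using gn_nonneg[OF ekf] gn_nonneg[OF ekb] by (metis less_eq_real_def mult_eq_0_iff)
  show ?thesis using gn_nonneg[OF ek_lmult[OF ekf ekb]] z by linarith
next
  case True
  define F where "F = gauss_norm av f"
  define G where "G = gauss_norm av b"
  define P where "P = gauss_norm av (lmult av f b)"
  have FG: "F * G > 0" using True unfolding F_def G_def by simp
  show ?thesis
  proof (rule ccontr)
    assume "\<not> ?thesis"
    then have lt: "P < F * G" unfolding P_def F_def G_def by simp
    have P0: "P \<ge> 0" unfolding P_def using gn_nonneg[OF ek_lmult[OF ekf ekb]] .
    define q where "q = P / (F * G)"
    have q0: "q \<ge> 0" and q1: "q < 1" using lt P0 FG unfolding q_def by (auto simp: divide_simps)
    define s where "s = (1 + q) / 2"
    have s0: "s > 0" and s1: "s < 1" and sq: "q < s" using q0 q1 unfolding s_def by auto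
    define t where "t = root 4 s"
    have t0: "0 < t" unfolding t_def using s0 by (simp add: real_root_gt_zero)
    have t1: "t < 1" unfolding t_def using s1 by simp
    have t4: "t^4 = s" unfolding t_def using s0 by simp
    obtain n where n: "av (lmult av f b n) \<ge> t^4 * F * G"
      using mult_approx[OF ekf ekb t0 t1] True unfolding F_def G_def by blast
    have "av (lmult av f b n) \<le> P" unfolding P_def using gn_ge[OF ek_lmult[OF ekf ekb]] .
    moreover have "q * (F * G) = P"
    proof -
      have "F \<noteq> 0" "G \<noteq> 0" using True unfolding F_def G_def by auto
      then show ?thesis unfolding q_def by simp
    qed
    moreover have "q * (F * G) < s * (F * G)" using mult_strict_right_mono[OF sq FG] .
    ultimately show False using n t4 by (simp add: mult.assoc)
  qed
qed

lemma gn_dom: assumes ekx: "ek x" and eky: "ek y" and lt: "gauss_norm av y < gauss_norm av x"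
  shows "gauss_norm av x \<le> gauss_norm av (\<lambda>n. y n + x n)"
proof (rule ccontr)
  assume "\<not> ?thesis"
  then have a: "gauss_norm av (\<lambda>n. y n + x n) < gauss_norm av x" by simp
  define s where "s = max (gauss_norm av (\<lambda>n. y n + x n)) (gauss_norm av y)"
  have "s < gauss_norm av x" unfolding s_def using a lt by simp
  then obtain n where n: "s < av (x n)" using gn_exceed[OF ekx] by blast
  have "av (y n) \<le> gauss_norm av y" using gn_ge[OF eky] .
  then have "av (y n) < av (x n)" using n unfolding s_def by linarith
  then have "av (x n) \<le> av (x n + y n)" by (rule av_dom)
  also have "\<dots> \<le> gauss_norm av (\<lambda>n. y n + x n)"
    using gn_ge[OF ek_add[OF eky ekx], of n] by (simp add: add.commute)
  finally show False using n unfolding s_def by linarith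
qed

lemma caseB: assumes ek: "ek a" and big: "av (a i) > 1"
  shows "gauss_norm av (gbr av a k) \<ge> 1"
proof -
  define b where "b = ldivT a"
  define Mb where "Mb = gauss_norm av b"
  have ekb: "ek b" unfolding b_def using ek_ldivT[OF ek] .
  have "av (b (i - 1)) = av (a i)" unfolding b_def ldivT_def by simp
  then have Mb1: "Mb > 1" unfolding Mb_def using gn_ge[OF ekb, of "i - 1"] big by linarith
  have "gauss_norm av (gbr av a k) \<ge> Mb ^ k" for k
  proof (induction k)
    case 0
    have "av (lone 0 :: 'k) = 1" unfolding lone_def by simp
    then show ?case using gn_ge[OF ek_lone, of 0] by simp
  next
    case (Suc k)
    define f where "f = gbr av a k"
    have ekf: "ek f" unfolding f_def using ek_gbr[OF ek] .
    define F where "F = gauss_norm av f"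
    have F: "F \<ge> Mb ^ k" using Suc.IH unfolding F_def f_def .
    have Fpos: "F > 0" using F Mb1 by (smt (verit) one_le_power)
    have D: "gauss_norm av (lderiv f) \<le> F"
    proof (rule gn_le)
      fix n
      have "av (lderiv f n) \<le> av (f (n + 1))"
        unfolding lderiv_def using av_of_int_le1[of "n+1"] by (simp add: mult_left_le_one_le)
      then show "av (lderiv f n) \<le> F" using gn_ge[OF ekf, of "n+1"] unfolding F_def by linarith
    qed
    have P: "F * Mb \<le> gauss_norm av (lmult av f b)" unfolding F_def Mb_def using gn_mult[OF ekf ekb] .
    have "F < F * Mb" using Fpos Mb1 by simp
    then have "gauss_norm av (lderiv f) < gauss_norm av (lmult av f b)" using D P by linarith
    then have "gauss_norm av (lmult av f b) \<le> gauss_norm av (\<lambda>n. lderiv f n + lmult av f b n)"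
      by (rule gn_dom[OF ek_lmult[OF ekf ekb] ek_lderiv[OF ekf]])
    moreover have "gbr av a (Suc k) = (\<lambda>n. lderiv f n + lmult av f b n)" unfolding f_def b_def by simp
    then have "gauss_norm av (gbr av a (Suc k)) = gauss_norm av (\<lambda>n. lderiv f n + lmult av f b n)" by simp
    moreover have "Mb ^ Suc k \<le> F * Mb" using F Mb1 by (simp add: mult.commute mult_right_mono)
    ultimately show ?case using P by linarith
  qed
  then show ?thesis using Mb1 by (meson one_le_power less_imp_le order_trans)
qed

end


context nav begin

lemma fact_prefix: "av (of_nat (fact (a + d))) \<le> av (of_nat (fact a))"
proof (induction d)
  case 0 then show ?case by simp
next
  case (Suc d)
  have "of_nat (fact (a + Suc d)) = (of_nat (Suc (a + d)) :: 'k) * of_nat (fact (a + d))"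
    by (simp only: add_Suc_right fact_Suc of_nat_mult of_nat_id)
  then have "av (of_nat (fact (a + Suc d)) :: 'k) = av (of_nat (Suc (a + d)) :: 'k) * av (of_nat (fact (a + d)) :: 'k)"
    by simp
  also have "\<dots> \<le> 1 * av (of_nat (fact (a + d)) :: 'k)"
    by (rule mult_right_mono[OF av_of_nat_le1 av_nonneg])
  finally show ?case using Suc.IH by simp
qed

lemma fact_pm: assumes "p \<ge> 1"
  shows "av (of_nat (fact (p * m)) :: 'k) \<le> av (of_nat p :: 'k) ^ m * av (of_nat (fact m) :: 'k)"
proof (induction m)
  case 0 then show ?case by simp
next
  case (Suc m)
  define x where "x = p * m + (p - 1)"
  have px: "p * Suc m = Suc x" unfolding x_def using assms by simp
  have "of_nat (fact (p * Suc m)) = (of_nat p :: 'k) * of_nat (Suc m) * of_nat (fact x)"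
    unfolding px fact_Suc of_nat_mult of_nat_id by (simp only: px[symmetric] of_nat_mult)
  then have "av (of_nat (fact (p * Suc m)) :: 'k) = av (of_nat p :: 'k) * av (of_nat (Suc m) :: 'k) * av (of_nat (fact x) :: 'k)"
    by simp
  also have "\<dots> \<le> av (of_nat p :: 'k) * av (of_nat (Suc m) :: 'k) * av (of_nat (fact (p * m)) :: 'k)"
    unfolding x_def by (rule mult_left_mono[OF fact_prefix]) simp
  also have "\<dots> \<le> av (of_nat p :: 'k) * av (of_nat (Suc m) :: 'k) * (av (of_nat p :: 'k) ^ m * av (of_nat (fact m) :: 'k))"
    by (rule mult_left_mono[OF Suc.IH]) simp
  also have "\<dots> = av (of_nat p :: 'k) ^ Suc m * av (of_nat (fact (Suc m)) :: 'k)"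
    by (simp only: fact_Suc of_nat_mult of_nat_id av_mult power_Suc mult_ac)
  finally show ?case .
qed

lemma fact_pn: assumes p2: "p \<ge> 2" and xp: "av (of_nat p :: 'k) > 0"
  shows "av (of_nat (fact (p ^ n)) :: 'k) \<le> av (of_nat p :: 'k) powr ((real (p ^ n) - 1) / (real p - 1))"
proof (induction n)
  case 0 then show ?case using xp p2 by simp
next
  case (Suc n)
  define x where "x = av (of_nat p :: 'k)"
  define e where "e = (real (p ^ n) - 1) / (real p - 1)"
  have "av (of_nat (fact (p ^ Suc n)) :: 'k) \<le> x ^ (p ^ n) * av (of_nat (fact (p ^ n)) :: 'k)"
  proof -
    have p1: "p \<ge> 1" using p2 by simp
    have "p ^ Suc n = p * p ^ n" by simp
    then show ?thesis unfolding x_def using fact_pm[OF p1, of "p ^ n"] by simp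
  qed
  also have "\<dots> \<le> x ^ (p ^ n) * x powr e"
    unfolding x_def e_def by (rule mult_left_mono[OF Suc.IH]) simp
  also have "\<dots> = x powr (real (p ^ n)) * x powr e"
    using xp powr_realpow[of x "p ^ n"] unfolding x_def by metis
  also have "\<dots> = x powr (real (p ^ n) + e)" by (simp only: powr_add)
  also have "real (p ^ n) + e = (real (p ^ Suc n) - 1) / (real p - 1)"
  proof -
    have "real p - 1 \<noteq> 0" using p2 by simp
    then show ?thesis unfolding e_def by (simp add: field_simps)
  qed
  finally show ?case unfolding x_def .
qed


lemma ray_le:
  assumes gn1: "\<And>k. gauss_norm av (gbr av a k) \<ge> 1" and p2: "p \<ge> 2" and xp: "av (of_nat p :: 'k) > 0"
  shows "ray av a \<le> ereal (av (of_nat p :: 'k) powr (1 / (real p - 1)))"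
proof -
  define x where "x = av (of_nat p :: 'k)"
  define X where "X = (\<lambda>k. if gauss_norm av (gbr av a k) = 0 then \<infinity>
      else ereal ((gauss_norm av (gbr av a k) / av (of_nat (fact k) :: 'k)) powr (- 1 / real k)))"
  have ray_eq: "ray av a = min 1 (liminf X)" unfolding ray_def X_def by simp
  define \<sigma> where "\<sigma> = (\<lambda>n::nat. p ^ Suc n)"
  have sm: "strict_mono \<sigma>" unfolding \<sigma>_def using p2 by (intro strict_monoI) (simp add: power_strict_increasing_iff)
  define Y where "Y = (\<lambda>n. x powr ((1 - 1 / real (\<sigma> n)) / (real p - 1)))"
  have XY: "(X \<circ> \<sigma>) n \<le> ereal (Y n)" for n
  proof -
    define k where "k = \<sigma> n"
    have k1: "k \<ge> 1" unfolding k_def \<sigma>_def using p2 by simp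
    define g where "g = gauss_norm av (gbr av a k)"
    have g1: "g \<ge> 1" unfolding g_def by (rule gn1)
    define af where "af = av (of_nat (fact k) :: 'k)"
    have af0: "af > 0" unfolding af_def by (intro av_pos) simp
    have Xk: "X k = ereal ((g / af) powr (- 1 / real k))" unfolding X_def g_def af_def using g1[unfolded g_def] by simp
    have "(g / af) powr (- 1 / real k) \<le> (1 / af) powr (- 1 / real k)"
    proof (rule powr_mono2')
      show "- 1 / real k \<le> 0" by simp
      show "0 < 1 / af" using af0 by simp
      show "1 / af \<le> g / af" using af0 g1 by (simp add: divide_right_mono)
    qed
    also have "(1 / af) powr (- 1 / real k) = af powr (1 / real k)"
      using af0 by (simp add: powr_def ln_div)
    also have "af powr (1 / real k) \<le> (x powr ((real k - 1) / (real p - 1))) powr (1 / real k)"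
    proof (rule powr_mono2)
      show "0 \<le> 1 / real k" by simp
      show "0 \<le> af" using af0 by simp
      show "af \<le> x powr ((real k - 1) / (real p - 1))"
        unfolding af_def x_def k_def \<sigma>_def using fact_pn[OF p2 xp, of "Suc n"] by simp
    qed
    also have "\<dots> = x powr ((real k - 1) / (real p - 1) * (1 / real k))" by (rule powr_powr)
    also have "(real k - 1) / (real p - 1) * (1 / real k) = (1 - 1 / real k) / (real p - 1)"
      using k1 by (simp add: field_simps)
    finally have "(g / af) powr (- 1 / real k) \<le> Y n" unfolding Y_def k_def .
    then show ?thesis using Xk unfolding k_def by simp
  qed
  have inv0: "(\<lambda>n. 1 / real (\<sigma> n)) \<longlonglongrightarrow> 0"
  proof -
    have "(\<lambda>n. 1 / real n) \<longlonglongrightarrow> 0" using lim_inverse_n by (simp add: inverse_eq_divide)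
    from LIMSEQ_subseq_LIMSEQ[OF this sm] show ?thesis by (simp add: comp_def)
  qed
  have Ylim: "Y \<longlonglongrightarrow> x powr (1 / (real p - 1))"
  proof -
    have "(\<lambda>n. (1 - 1 / real (\<sigma> n)) / (real p - 1)) \<longlonglongrightarrow> (1 - 0) / (real p - 1)"
      using p2 by (intro tendsto_intros inv0) simp
    then have e: "(\<lambda>n. (1 - 1 / real (\<sigma> n)) / (real p - 1)) \<longlonglongrightarrow> 1 / (real p - 1)" by simp
    have "x \<noteq> 0" using xp unfolding x_def by linarith
    then show ?thesis unfolding Y_def by (intro tendsto_powr[OF tendsto_const e])
  qed
  have "liminf X \<le> liminf (X \<circ> \<sigma>)" by (rule liminf_subseq_mono[OF sm])
  also have "\<dots> \<le> liminf (\<lambda>n. ereal (Y n))" by (intro Liminf_mono always_eventually allI XY)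
  also have "liminf (\<lambda>n. ereal (Y n)) = ereal (x powr (1 / (real p - 1)))"
    by (intro lim_imp_Liminf trivial_limit_sequentially tendsto_ereal Ylim)
  finally have "liminf X \<le> ereal (x powr (1 / (real p - 1)))" .
  then show ?thesis unfolding ray_eq x_def by (simp add: min.coboundedI2)
qed

end

theorem lemma2p1p3:
  fixes av :: "'k::field_char_0 \<Rightarrow> real" and p :: nat and a :: "int \<Rightarrow> 'k"
  assumes "nonarch_av av" and "av_complete av"
    and "prime p" and "av (of_nat p) < 1"
    and "in_EK av a"
    and "ray av a > ereal (av (of_nat p) powr (1 / (real p - 1)))"
  shows "\<forall>i \<le> -1. av (a i) < 1"
proof -
  interpret nav av using assms(1,2) by unfold_locales
  have eka: "ek a" using in_EK_ek assms(5) by blast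
  show ?thesis
  proof (rule ccontr)
    assume "\<not> (\<forall>i \<le> -1. av (a i) < 1)"
    then obtain j where j: "j \<le> -1" "av (a j) \<ge> 1" by (auto simp: not_less)
    have gn1: "gauss_norm av (gbr av a k) \<ge> 1" for k
    proof (cases "\<exists>i. av (a i) > 1")
      case True then obtain i where "av (a i) > 1" by blast
      then show ?thesis using caseB[OF eka] by blast
    next
      case False
      then have le1: "\<And>i. av (a i) \<le> 1" by (simp add: not_less)
      obtain N where N: "\<forall>i<N. av (a i) < 1" using ek_tl[OF eka, of 1] by auto
      have jN: "N \<le> j"
      proof (rule ccontr)
        assume "\<not> N \<le> j" then have "av (a j) < 1" using N by simp
        then show False using j by simp
      qed
      define S where "S = {n::nat. av (a (N + int n)) \<ge> 1}"
      have jS: "nat (j - N) \<in> S" using j jN unfolding S_def by simp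
      define l where "l = (LEAST n. n \<in> S)"
      have lS: "l \<in> S" unfolding l_def using jS by (rule LeastI)
      have "l \<le> nat (j - N)" unfolding l_def using jS by (rule Least_le)
      define m where "m = N + int l"
      have mj: "m \<le> -1" using \<open>l \<le> nat (j - N)\<close> jN j unfolding m_def by linarith
      have am: "av (a m) = 1" using lS le1[of m] unfolding S_def m_def by simp
      have below: "av (a i) < 1" if "i < m" for i
      proof (cases "i < N")
        case True then show ?thesis using N by simp
      next
        case False
        then have "nat (i - N) < l" using that unfolding m_def by linarith
        then have "nat (i - N) \<notin> S" unfolding l_def by (rule not_less_Least)
        then show ?thesis using False unfolding S_def by simp
      qed
      show ?thesis by (rule caseA[OF eka le1 mj am below])
    qed
    have p2: "p \<ge> 2" using prime_ge_2_nat assms(3) by blast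
    have xp: "av (of_nat p :: 'k) > 0" using p2 by (intro av_pos) simp
    have "ray av a \<le> ereal (av (of_nat p) powr (1 / (real p - 1)))" using ray_le[OF gn1 p2 xp] .
    then show False using assms(6) by simp
  qed
qed

end
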